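(* Let $i\ge1$ and $i+2\le s\le r$, and let $\mathcal H$ be an $s$-graph with $\Delta_i(\mathcal H)\le\binom{r-i}{s-i}$. If $\mathcal H(I)\cong K^{(s-i)}_{r-i}$ for every $I\in\partial_i(\mathcal H)$, then $\mathcal H$ is a packing shadow $\partial_sP(i,r)$, i.e. $\mathcal H=\partial_s(\mathcal A)$ for some $P(i,r)$ $\mathcal A$.
   Context: An $s$-graph is a family of $s$-subsets (edges) of a vertex set $V$. For $|I|=i<s$, $\mathcal H(I)=\{E\setminus I: I\subseteq E\in\mathcal H\}$, an $(s-i)$-graph whose vertex set is the union of its edges; $d_{\mathcal H}(I)$ is the number of edges containing $I$, and $\Delta_i(\mathcal H)=\max_{|I|=i}d_{\mathcal H}(I)$. $\partial_q(\mathcal A)=\bigcup_{A\in\mathcal A}\binom{A}{q}$. $K^{(a)}_b$ is the complete $a$-graph on $b$ vertices. A $P(i,r)$ is a family of $r$-sets any two distinct members of which share fewer than $i$ elements; a packing shadow $\partial_sP(i,r)$ is the $s$-shadow of some $P(i,r)$. *)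

theory Defs
  imports Main
begin

definition s_graph :: "nat \<Rightarrow> 'a set set \<Rightarrow> bool" where
  "s_graph s H \<longleftrightarrow> (\<forall>E\<in>H. finite E \<and> card E = s)"

definition link :: "'a set set \<Rightarrow> 'a set \<Rightarrow> 'a set set" where
  "link H I = {E - I | E. E \<in> H \<and> I \<subseteq> E}"

definition deg :: "'a set set \<Rightarrow> 'a set \<Rightarrow> nat" where
  "deg H I = card {E \<in> H. I \<subseteq> E}"

definition shadow :: "nat \<Rightarrow> 'a set set \<Rightarrow> 'a set set" where
  "shadow q A = (\<Union>X\<in>A. {Y. Y \<subseteq> X \<and> card Y = q})"

definition verts :: "'a set set \<Rightarrow> 'a set" where
  "verts H = \<Union>H"

(* G is (isomorphic to) the complete a-graph on b vertices: a hypergraph whose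
   vertex set is the union of its edges is isomorphic to K^(a)_b iff its vertex
   set has exactly b elements and its edges are all a-subsets of it. *)
definition is_complete :: "nat \<Rightarrow> nat \<Rightarrow> 'a set set \<Rightarrow> bool" where
  "is_complete a b G \<longleftrightarrow> finite (verts G) \<and> card (verts G) = b \<and>
      G = {Y. Y \<subseteq> verts G \<and> card Y = a}"

definition packing :: "nat \<Rightarrow> nat \<Rightarrow> 'a set set \<Rightarrow> bool" where
  "packing i r A \<longleftrightarrow> (\<forall>X\<in>A. finite X \<and> card X = r) \<and>
      (\<forall>X\<in>A. \<forall>Y\<in>A. X \<noteq> Y \<longrightarrow> card (X \<inter> Y) < i)"

end

theory Submission
  imports Defs
begin

lemma extend_subset_card:
  assumes "finite V" "T \<subseteq> V" "card T \<le> k" "k \<le> card V"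
  shows "\<exists>S. T \<subseteq> S \<and> S \<subseteq> V \<and> card S = k"
proof -
  have "k - card T \<le> card (V - T)" using assms by (simp add: card_Diff_subset finite_subset)
  then obtain U where U: "U \<subseteq> V - T" "card U = k - card T"
    using obtain_subset_with_card_n by metis
  have fT: "finite T" using assms finite_subset by blast
  have fU: "finite U" using U assms finite_subset by (meson finite_Diff)
  have "card (T \<union> U) = card T + card U" using U fT fU by (intro card_Un_disjoint) auto
  then show ?thesis using U assms by (intro exI[of _ "T \<union> U"]) auto
qed

locale pkloc =
  fixes H :: "'a set set" and i s r :: nat
  assumes i1: "i \<ge> 1" and si: "i + 2 \<le> s" and sr: "s \<le> r"
    and sg: "s_graph s H"
    and cpl: "\<forall>I\<in>shadow i H. is_complete (s - i) (r - i) (link H I)"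
begin

definition V where "V I = verts (link H I)"
definition AA where "AA I = I \<union> V I"

lemma sh: "I \<in> shadow i H \<longleftrightarrow> card I = i \<and> (\<exists>E\<in>H. I \<subseteq> E)"
  unfolding shadow_def by auto

lemma shfin: "I \<in> shadow i H \<Longrightarrow> finite I"
proof -
  assume "I \<in> shadow i H"
  then have "card I = i" using sh by blast
  then have "card I > 0" using i1 by simp
  then show "finite I" by (rule card_ge_0_finite)
qed

lemma F2: assumes "I \<in> shadow i H"
  shows "link H I = {Y. Y \<subseteq> V I \<and> card Y = s-i}" "finite (V I)" "card (V I) = r - i"
  using cpl assms unfolding is_complete_def V_def by auto

lemma F3: "V I \<inter> I = {}"
  unfolding V_def verts_def link_def by auto

lemma F4: assumes "I \<in> shadow i H" shows "card (AA I) = r" "finite (AA I)"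
proof -
  have "card (AA I) = card I + card (V I)" unfolding AA_def
    using F2[OF assms] shfin[OF assms] F3 by (intro card_Un_disjoint) auto
  then show "card (AA I) = r" using F2[OF assms] sh assms si sr by auto
  show "finite (AA I)" unfolding AA_def using F2[OF assms] shfin[OF assms] by auto
qed

lemma F5: assumes "I \<in> shadow i H" "I \<subseteq> S" "S \<subseteq> AA I" "card S = s"
  shows "S \<in> H"
proof -
  have fS: "finite S" using F4(2)[OF assms(1)] assms(3) finite_subset by blast
  have "card (S - I) = s - i" using assms sh fS by (simp add: card_Diff_subset finite_subset)
  moreover have "S - I \<subseteq> V I" using assms(3) unfolding AA_def by auto
  ultimately have "S - I \<in> link H I" using F2(1)[OF assms(1)] by auto
  then obtain E where E: "E \<in> H" "I \<subseteq> E" "E - I = S - I" unfolding link_def by auto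
  then have "E = S" using assms(2) by blast
  then show ?thesis using E by simp
qed

lemma F6: assumes "E \<in> H" "I \<subseteq> E" shows "E \<subseteq> AA I"
proof -
  have "E - I \<in> link H I" using assms unfolding link_def by auto
  then have "E - I \<subseteq> V I" unfolding V_def verts_def by auto
  then show ?thesis unfolding AA_def by auto
qed

lemma edge_through: assumes "I \<in> shadow i H" "T \<subseteq> V I" "card T \<le> s - i"
  shows "\<exists>E\<in>H. I \<union> T \<subseteq> E"
proof -
  have "s - i \<le> card (V I)" using F2[OF assms(1)] sr by auto
  then obtain S where S: "T \<subseteq> S" "S \<subseteq> V I" "card S = s - i"
    using extend_subset_card[OF F2(2)[OF assms(1)] assms(2,3)] by blast
  have "card (I \<union> S) = card I + card S"
    using S F3[of I] F2(2)[OF assms(1)] shfin[OF assms(1)] finite_subset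
    by (intro card_Un_disjoint) auto
  then have "card (I \<union> S) = s" using S assms(1) sh si by auto
  then have "I \<union> S \<in> H" using S by (intro F5[OF assms(1)]) (auto simp: AA_def)
  then show ?thesis using S by blast
qed

lemma step: assumes "I \<in> shadow i H" "x \<in> I" "y \<in> AA I" "y \<notin> I"
  shows "insert y (I - {x}) \<in> shadow i H \<and> AA (insert y (I - {x})) = AA I"
proof -
  let ?J = "insert y (I - {x})"
  have yV: "y \<in> V I" using assms(3,4) unfolding AA_def by auto
  have fI: "finite I" using shfin[OF assms(1)] .
  have cJ: "card ?J = i" using assms fI sh i1 by (simp add: card_insert_if)
  obtain E where E: "E \<in> H" "I \<union> {y} \<subseteq> E"
    using edge_through[OF assms(1), of "{y}"] yV si by fastforce
  have Jsh: "?J \<in> shadow i H" using E cJ sh by blast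
  have "AA I \<subseteq> AA ?J"
  proof
    fix z assume z: "z \<in> AA I"
    show "z \<in> AA ?J"
    proof (cases "z \<in> I \<or> z = y")
      case True
      then show ?thesis using E F6[OF E(1), of ?J] by auto
    next
      case False
      then have "z \<in> V I" using z unfolding AA_def by auto
      moreover have "card {y,z} \<le> s - i" using si by (auto simp: card_insert_if)
      ultimately have "\<exists>E'\<in>H. I \<union> {y,z} \<subseteq> E'"
        using edge_through[OF assms(1), of "{y,z}"] yV by blast
      then obtain E' where E': "E' \<in> H" "I \<union> {y,z} \<subseteq> E'" by blast
      then show ?thesis using F6[OF E'(1), of ?J] by auto
    qed
  qed
  then have "AA I = AA ?J" using F4[OF Jsh] F4[OF assms(1)] by (intro card_subset_eq) auto
  then show ?thesis using Jsh by simp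
qed

lemma chain: "I \<in> shadow i H \<Longrightarrow> J \<subseteq> AA I \<Longrightarrow> card J = i \<Longrightarrow> card (J - I) = n
   \<Longrightarrow> J \<in> shadow i H \<and> AA J = AA I"
proof (induction n arbitrary: I)
  case 0
  have fJ: "finite J" using 0 F4 finite_subset by blast
  have fI: "finite I" using shfin[OF 0(1)] .
  have "J \<subseteq> I" using 0 fJ by auto
  then have "J = I" using fI 0 sh by (metis card_subset_eq)
  then show ?case using 0 by simp
next
  case (Suc n)
  have fJ: "finite J" using Suc F4 finite_subset by blast
  have fI: "finite I" using shfin[OF Suc(2)] .
  have "J - I \<noteq> {}" using Suc(5) by (metis card.empty nat.distinct(1))
  then obtain y where y: "y \<in> J" "y \<notin> I" by blast
  have cI: "card I = i" using Suc(2) sh by blast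
  have e1: "card (I - J) = card I - card (I \<inter> J)" using fI by (simp add: card_Diff_subset_Int)
  have e2: "card (J - I) = card J - card (J \<inter> I)" using fJ by (simp add: card_Diff_subset_Int)
  have "card (I - J) = card (J - I)" using e1 e2 cI Suc(4) by (simp add: Int_commute)
  then have "I - J \<noteq> {}" using Suc(5) by (metis card.empty nat.distinct(1))
  then obtain x where x: "x \<in> I" "x \<notin> J" by blast
  let ?I = "insert y (I - {x})"
  have st: "?I \<in> shadow i H \<and> AA ?I = AA I" using step[OF Suc(2) x(1) _ y(2)] y Suc(3) by auto
  have "J - ?I = (J - I) - {y}" using x by auto
  then have "card (J - ?I) = n" using Suc(5) y fJ by simp
  then show ?case using Suc.IH[of ?I] st Suc by auto
qed

end

theorem mainTheorem13:
  fixes H :: "'a set set" and i s r :: nat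
  assumes "i \<ge> 1" and "i + 2 \<le> s" and "s \<le> r"
    and "finite H" and "s_graph s H"
    and "\<forall>I. card I = i \<longrightarrow> deg H I \<le> (r - i) choose (s - i)"
    and "\<forall>I\<in>shadow i H. is_complete (s - i) (r - i) (link H I)"
  shows "\<exists>A. packing i r A \<and> H = shadow s A"
proof -
  interpret pkloc H i s r using assms by unfold_locales auto
  let ?A = "AA ` shadow i H"
  have pk: "packing i r ?A"
    unfolding packing_def
  proof (intro conjI)
    show "\<forall>X\<in>?A. finite X \<and> card X = r" using F4 by auto
  next
    show "\<forall>X\<in>?A. \<forall>Y\<in>?A. X \<noteq> Y \<longrightarrow> card (X \<inter> Y) < i"
    proof (intro ballI impI)
    fix X Y assume X: "X \<in> ?A" and Y: "Y \<in> ?A" and ne: "X \<noteq> Y"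
    obtain I J where I: "I \<in> shadow i H" "X = AA I" and J: "J \<in> shadow i H" "Y = AA J"
      using X Y by auto
    show "card (X \<inter> Y) < i"
    proof (rule ccontr)
      assume "\<not> card (X \<inter> Y) < i"
      then obtain K where K: "K \<subseteq> X \<inter> Y" "card K = i"
        using obtain_subset_with_card_n by (metis not_less)
      have "AA K = AA I" using chain[OF I(1), of K] K I by auto
      moreover have "AA K = AA J" using chain[OF J(1), of K] K J by auto
      ultimately show False using ne I J by simp
    qed
    qed
  qed
  have "H = shadow s ?A"
  proof
    show "H \<subseteq> shadow s ?A"
    proof
      fix E assume E: "E \<in> H"
      have cE: "card E = s" using sg E unfolding s_graph_def by auto
      then obtain I where I: "I \<subseteq> E" "card I = i" using obtain_subset_with_card_n assms(2)
        by (metis add_leD1)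
      have Ish: "I \<in> shadow i H" using I E sh by auto
      have "AA I \<in> ?A" using Ish by blast
      then show "E \<in> shadow s ?A" unfolding shadow_def using F6[OF E I(1)] cE by blast
    qed
  next
    show "shadow s ?A \<subseteq> H"
    proof
      fix S assume "S \<in> shadow s ?A"
      then obtain I where I: "I \<in> shadow i H" "S \<subseteq> AA I" "card S = s"
        unfolding shadow_def by auto
      obtain J where J: "J \<subseteq> S" "card J = i" using obtain_subset_with_card_n I(3) assms(2)
        by (metis add_leD1)
      have "J \<in> shadow i H \<and> AA J = AA I" using chain[OF I(1), of J] J I by auto
      then show "S \<in> H" using F5[of J S] J I by auto
    qed
  qed
  then show ?thesis using pk by blast
qed

end
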